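(* Let $(\Omega,\mathcal{F},\mathbf{P})$ be a probability space with $\sigma$-fields $\{\emptyset,\Omega\}=\mathcal{F}_0\subseteq\mathcal{F}_1\subseteq\cdots\subseteq\mathcal{F}_n\subseteq\mathcal{F}$, and let $(\xi_i,\mathcal{F}_i)_{i=1,\dots,n}$ be a sequence of conditionally symmetric martingale differences, i.e. each $\xi_i$ is real-valued, $\mathcal{F}_i$-measurable, integrable, $\mathbf{E}(\xi_i\mid\mathcal{F}_{i-1})=0$, and $\mathbf{P}(\xi_i>y\mid\mathcal{F}_{i-1})=\mathbf{P}(\xi_i<-y\mid\mathcal{F}_{i-1})$ for all $i$ and all $y\ge0$. Let $S_k=\sum_{i=1}^k\xi_i$ and, for $y\ge0$, \[ \mathrm{M}_k^{y}=\sum_{i=1}^k\Big(\mathbf{E}\big(\xi_i^2\mathbf{1}_{\{|\xi_i|\le y\}}\mid\mathcal{F}_{i-1}\big)+\xi_i^2\mathbf{1}_{\{|\xi_i|>y\}}\Big). \] Then for all $x,v>0$ and all $y\ge0$, \[ \mathbf{P}\Big(S_k\ge x\ \text{and}\ \mathrm{M}_k^{y}\le v^2\ \text{for some}\ k\in[1,n]\Big)\le B_0(x,y,v), \] where for $y>0$ \[ B_0(x,y,v)=\exp\left\{-\lambda x+\left(\frac{\cosh(\lambda y)-1}{y^2}\right)v^2\right\},\qquad \lambda=\frac1y\log\left(\sqrt{1+\frac{x^2y^2}{v^4}}+\frac{xy}{v^2}\right), \] and for $y=0$ one sets $B_0(x,0,v)=\lim_{y\to0+}B_0(x,y,v)=\exp\{-x^2/(2v^2)\}$.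 *)

theory Defs
  imports "HOL-Probability.Probability"
begin

definition B0 :: "real \<Rightarrow> real \<Rightarrow> real \<Rightarrow> real" where
  "B0 x y v =
    (if y = 0 then exp (- (x\<^sup>2) / (2 * v\<^sup>2))
     else (let lam = (1 / y) * ln (sqrt (1 + x\<^sup>2 * y\<^sup>2 / v ^ 4) + x * y / v\<^sup>2)
           in exp (- lam * x + ((cosh (lam * y) - 1) / y\<^sup>2) * v\<^sup>2)))"

end

theory Submission
  imports Defs
begin


lemma borel_gen_eq:
  "sets (borel :: real measure) = sigma_sets UNIV ({UNIV, {}} \<union> {{x<..} | x. x \<ge> 0} \<union> {{..<x} | x. x \<le> 0})"
  (is "_ = sigma_sets UNIV ?E")
proof -
  have "sets (borel :: real measure) = sigma_sets UNIV (range atMost)"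
    by (subst borel_eq_atMost) simp
  also have "\<dots> = sigma_sets UNIV ?E"
  proof (rule sigma_sets_eqI)
    fix b assume "b \<in> ?E"
    then have "b \<in> sets (borel :: real measure)" by auto
    then show "b \<in> sigma_sets UNIV (range atMost)"
      by (subst (asm) borel_eq_atMost) simp
  next
    fix A :: "real set" assume "A \<in> range atMost"
    then obtain a where A: "A = {..a}" by auto
    show "A \<in> sigma_sets UNIV ?E"
    proof (cases "a \<ge> 0")
      case True
      have "UNIV - {a<..} \<in> sigma_sets UNIV ?E"
        by (rule sigma_sets.Compl, rule sigma_sets.Basic) (use True in auto)
      moreover have "UNIV - {a<..} = A" using A by auto
      ultimately show ?thesis by simp
    next
      case False
      have each: "{..< a * (real n+1)/(real n+2)} \<in> sigma_sets UNIV ?E" for n :: nat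
      proof -
        have "a * (real n+1)/(real n+2) \<le> 0" using False by (simp add: divide_nonpos_pos mult_nonpos_nonneg)
        then show ?thesis by (intro sigma_sets.Basic) blast
      qed
      have "(\<Inter>n::nat. {..< a * (real n+1)/(real n+2)}) \<in> sigma_sets UNIV ?E"
        by (rule sigma_sets_Inter[OF _ each]) auto
      moreover have "(\<Inter>n::nat. {..< a * (real n+1)/(real n+2)}) = A"
      proof (intro set_eqI iffI)
        fix t assume t: "t \<in> A"
        show "t \<in> (\<Inter>n::nat. {..< a * (real n+1)/(real n+2)})"
        proof
          fix n :: nat
          have "a * (real n+1)/(real n+2) = a - a/(real n+2)" by (simp add: field_simps)
          moreover have "a/(real n+2) < 0" using False by (simp add: divide_neg_pos)
          ultimately show "t \<in> {..< a * (real n+1)/(real n+2)}" using t A by auto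
        qed
      next
        fix t assume t: "t \<in> (\<Inter>n::nat. {..< a * (real n+1)/(real n+2)})"
        show "t \<in> A"
        proof (rule ccontr)
          assume "t \<notin> A"
          then have ta: "t > a" using A by auto
          obtain n :: nat where n: "-a/(t-a) < n" using reals_Archimedean2 by blast
          have "(-a)/(t-a) < n" using n by simp
          then have "-a < n * (t - a)" using pos_divide_less_eq[of "t-a" "-a" n] ta by simp
          also have "\<dots> \<le> (real n+2) * (t-a)" using ta by (intro mult_right_mono) auto
          finally have "-a < (real n+2) * (t-a)" .
          then have "(-a)/(real n+2) < t-a" using pos_divide_less_eq[of "real n+2" "-a" "t-a"] by (simp add: mult.commute)
          moreover have "a * (real n+1)/(real n+2) = a - a/(real n+2)" by (simp add: field_simps)
          moreover have "t < a * (real n+1)/(real n+2)" using t by auto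
          ultimately show False by simp
        qed
      qed
      ultimately show ?thesis by simp
    qed
  qed
  finally show ?thesis .
qed


lemma sym_half:
  fixes \<xi> k :: "'a \<Rightarrow> real" and z N :: real
  assumes P: "prob_space M" and G: "subalgebra M G"
    and xi: "\<xi> \<in> borel_measurable M"
    and symm: "\<And>z. z \<ge> 0 \<Longrightarrow> AE \<omega> in M. real_cond_exp M G (indicator {\<omega>' \<in> space M. \<xi> \<omega>' > z}) \<omega>
                  = real_cond_exp M G (indicator {\<omega>' \<in> space M. \<xi> \<omega>' < - z}) \<omega>"
    and k: "k \<in> borel_measurable G" "\<And>\<omega>. 0 \<le> k \<omega>" "\<And>\<omega>. k \<omega> \<le> N"
    and z: "z \<ge> 0"
  shows "(\<integral>\<^sup>+\<omega>. ennreal (k \<omega> * indicator {\<omega>' \<in> space M. \<xi> \<omega>' > z} \<omega>) \<partial>M)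
       = (\<integral>\<^sup>+\<omega>. ennreal (k \<omega> * indicator {\<omega>' \<in> space M. \<xi> \<omega>' < - z} \<omega>) \<partial>M)"
proof -
  interpret P: prob_space M by (rule P)
  interpret S: finite_measure_subalgebra M G by unfold_locales (rule G)
  have km[measurable]: "k \<in> borel_measurable M" by (rule measurable_from_subalg[OF G k(1)])
  have A1[measurable]: "{\<omega>' \<in> space M. \<xi> \<omega>' > z} \<in> sets M"
    using measurable_sets[OF xi borel_open[OF open_greaterThan[of z]]] by (simp add: vimage_def Int_def conj_commute borel_open)
  have A2[measurable]: "{\<omega>' \<in> space M. \<xi> \<omega>' < - z} \<in> sets M"
    using measurable_sets[OF xi borel_open[OF open_lessThan[of "-z"]]] by (simp add: vimage_def Int_def conj_commute borel_open)
  have N0: "0 \<le> N" using k(2)[of undefined] k(3)[of undefined] by linarith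
  have int: "integrable M (\<lambda>\<omega>. k \<omega> * indicator A \<omega>)" if [measurable]: "A \<in> sets M" for A
    by (rule P.integrable_const_bound[where B=N]) (use k N0 in \<open>auto simp: indicator_def\<close>)
  have "(\<integral>\<omega>. k \<omega> * indicator {\<omega>' \<in> space M. \<xi> \<omega>' > z} \<omega> \<partial>M)
        = (\<integral>\<omega>. k \<omega> * real_cond_exp M G (indicator {\<omega>' \<in> space M. \<xi> \<omega>' > z}) \<omega> \<partial>M)"
    by (rule S.real_cond_exp_intg(2)[symmetric, OF int[OF A1] k(1)]) simp
  also have "\<dots> = (\<integral>\<omega>. k \<omega> * real_cond_exp M G (indicator {\<omega>' \<in> space M. \<xi> \<omega>' < - z}) \<omega> \<partial>M)"
    by (rule integral_cong_AE) (use symm[OF z] in auto)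
  also have "\<dots> = (\<integral>\<omega>. k \<omega> * indicator {\<omega>' \<in> space M. \<xi> \<omega>' < - z} \<omega> \<partial>M)"
    by (rule S.real_cond_exp_intg(2)[OF int[OF A2] k(1)]) simp
  finally have eq: "(\<integral>\<omega>. k \<omega> * indicator {\<omega>' \<in> space M. \<xi> \<omega>' > z} \<omega> \<partial>M)
     = (\<integral>\<omega>. k \<omega> * indicator {\<omega>' \<in> space M. \<xi> \<omega>' < - z} \<omega> \<partial>M)" .
  show ?thesis
    using eq by (subst (1 2) nn_integral_eq_integral) (use int k in \<open>auto\<close>)
qed


lemma sym_nn:
  fixes \<xi> k :: "'a \<Rightarrow> real" and N :: real and \<psi> :: "real \<Rightarrow> ennreal"
  assumes P: "prob_space M" and G: "subalgebra M G"
    and xi: "\<xi> \<in> borel_measurable M"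
    and symm: "\<And>z. z \<ge> 0 \<Longrightarrow> AE \<omega> in M. real_cond_exp M G (indicator {\<omega>' \<in> space M. \<xi> \<omega>' > z}) \<omega>
                  = real_cond_exp M G (indicator {\<omega>' \<in> space M. \<xi> \<omega>' < - z}) \<omega>"
    and k: "k \<in> borel_measurable G" "\<And>\<omega>. 0 \<le> k \<omega>" "\<And>\<omega>. k \<omega> \<le> N"
    and psi: "\<psi> \<in> borel_measurable borel"
  shows "(\<integral>\<^sup>+\<omega>. ennreal (k \<omega>) * \<psi> (\<xi> \<omega>) \<partial>M) = (\<integral>\<^sup>+\<omega>. ennreal (k \<omega>) * \<psi> (- \<xi> \<omega>) \<partial>M)"
proof -
  interpret P: prob_space M by (rule P)
  have km[measurable]: "k \<in> borel_measurable M" by (rule measurable_from_subalg[OF G k(1)])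
  have xim[measurable]: "\<xi> \<in> borel_measurable M" by (rule xi)
  have N0: "0 \<le> N" using k(2)[of undefined] k(3)[of undefined] by linarith
  define D where "D = density M (\<lambda>\<omega>. ennreal (k \<omega>))"
  have em: "emeasure (distr D borel f) X = (\<integral>\<^sup>+\<omega>. ennreal (k \<omega> * indicator {\<omega>'\<in>space M. f \<omega>' \<in> X} \<omega>) \<partial>M)"
    if f[measurable]: "f \<in> borel_measurable M" and X[measurable]: "X \<in> sets borel" for f X
  proof -
    have "emeasure (distr D borel f) X = emeasure D (f -` X \<inter> space D)"
      by (rule emeasure_distr) (simp_all add: D_def)
    also have "\<dots> = (\<integral>\<^sup>+\<omega>. ennreal (k \<omega>) * indicator (f -` X \<inter> space M) \<omega> \<partial>M)"
      unfolding D_def by (subst emeasure_density) (auto intro: measurable_sets)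
    also have "\<dots> = (\<integral>\<^sup>+\<omega>. ennreal (k \<omega> * indicator {\<omega>'\<in>space M. f \<omega>' \<in> X} \<omega>) \<partial>M)"
      by (intro nn_integral_cong) (auto simp: indicator_def)
    finally show ?thesis .
  qed
  let ?E = "{UNIV, {}} \<union> {{x<..} | x::real. x \<ge> 0} \<union> {{..<x} | x. x \<le> 0}"
  have "distr D borel \<xi> = distr D borel (\<lambda>\<omega>. - \<xi> \<omega>)"
  proof (rule measure_eqI_generator_eq[where \<Omega>=UNIV and E="?E" and A="\<lambda>_. UNIV"])
    show "Int_stable ?E"
      unfolding Int_stable_def
    proof (intro ballI)
      fix a b assume a: "a \<in> ?E" and b: "b \<in> ?E"
      show "a \<inter> b \<in> ?E"
      proof -
        have "a \<inter> b = {} \<or> a \<inter> b = a \<or> a \<inter> b = b \<or> (\<exists>x\<ge>0. a \<inter> b = {x<..}) \<or> (\<exists>x\<le>0. a \<inter> b = {..<x})"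
          using a b
          apply (elim UnE insertE CollectE exE conjE emptyE)
          apply (simp_all add: greaterThan_Int_greaterThan lessThan_Int_lessThan)
          apply (auto intro: max.coboundedI1 min.coboundedI1)
          done
        then show ?thesis using a b by blast
      qed
    qed
    show "?E \<subseteq> Pow UNIV" by auto
    show "sets (distr D borel \<xi>) = sigma_sets UNIV ?E" using borel_gen_eq by simp
    show "sets (distr D borel (\<lambda>\<omega>. - \<xi> \<omega>)) = sigma_sets UNIV ?E" using borel_gen_eq by simp
    show "range (\<lambda>_. UNIV) \<subseteq> ?E" by auto
    show "(\<Union>i::nat. UNIV) = (UNIV :: real set)" by auto
    fix i :: nat
    have "emeasure (distr D borel \<xi>) UNIV = (\<integral>\<^sup>+\<omega>. ennreal (k \<omega> * indicator {\<omega>'\<in>space M. \<xi> \<omega>' \<in> UNIV} \<omega>) \<partial>M)"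
      by (rule em) auto
    also have "\<dots> \<le> (\<integral>\<^sup>+\<omega>. ennreal N \<partial>M)"
      by (intro nn_integral_mono) (use k in \<open>auto simp: indicator_def intro!: ennreal_leI\<close>)
    also have "\<dots> < \<infinity>" by (simp add: P.emeasure_space_1)
    finally show "emeasure (distr D borel \<xi>) UNIV \<noteq> \<infinity>" by simp
  next
    fix X assume "X \<in> ?E"
    then consider "X = UNIV" | "X = {}" | z where "z \<ge> 0" "X = {z<..}" | z where "z \<ge> 0" "X = {..< -z}"
      by (auto intro: that(3,4)[of "- _"] simp: minus_le_iff)
    then show "emeasure (distr D borel \<xi>) X = emeasure (distr D borel (\<lambda>\<omega>. - \<xi> \<omega>)) X"
    proof cases
      case 1 then show ?thesis by (simp add: em)
    next
      case 2 then show ?thesis by simp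
    next
      case (3 z)
      have "emeasure (distr D borel \<xi>) X = (\<integral>\<^sup>+\<omega>. ennreal (k \<omega> * indicator {\<omega>' \<in> space M. \<xi> \<omega>' > z} \<omega>) \<partial>M)"
        using 3 by (subst em) auto
      also have "\<dots> = (\<integral>\<^sup>+\<omega>. ennreal (k \<omega> * indicator {\<omega>' \<in> space M. \<xi> \<omega>' < - z} \<omega>) \<partial>M)"
        by (rule sym_half[OF P G xi symm k 3(1)])
      also have "\<dots> = emeasure (distr D borel (\<lambda>\<omega>. - \<xi> \<omega>)) X"
        using 3 by (subst em) (auto intro!: nn_integral_cong simp: indicator_def)
      finally show ?thesis .
    next
      case (4 z)
      have "emeasure (distr D borel \<xi>) X = (\<integral>\<^sup>+\<omega>. ennreal (k \<omega> * indicator {\<omega>' \<in> space M. \<xi> \<omega>' < - z} \<omega>) \<partial>M)"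
        using 4 by (subst em) auto
      also have "\<dots> = (\<integral>\<^sup>+\<omega>. ennreal (k \<omega> * indicator {\<omega>' \<in> space M. \<xi> \<omega>' > z} \<omega>) \<partial>M)"
        by (rule sym_half[OF P G xi symm k 4(1), symmetric])
      also have "\<dots> = emeasure (distr D borel (\<lambda>\<omega>. - \<xi> \<omega>)) X"
        using 4 by (subst em) (auto intro!: nn_integral_cong simp: indicator_def)
      finally show ?thesis .
    qed
  qed
  then have "integral\<^sup>N (distr D borel \<xi>) \<psi> = integral\<^sup>N (distr D borel (\<lambda>\<omega>. - \<xi> \<omega>)) \<psi>" by simp
  moreover have "integral\<^sup>N (distr D borel \<xi>) \<psi> = (\<integral>\<^sup>+\<omega>. ennreal (k \<omega>) * \<psi> (\<xi> \<omega>) \<partial>M)"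
    using psi unfolding D_def by (subst nn_integral_distr) (simp_all add: nn_integral_density)
  moreover have "integral\<^sup>N (distr D borel (\<lambda>\<omega>. - \<xi> \<omega>)) \<psi> = (\<integral>\<^sup>+\<omega>. ennreal (k \<omega>) * \<psi> (- \<xi> \<omega>) \<partial>M)"
    using psi unfolding D_def by (subst nn_integral_distr) (simp_all add: nn_integral_density)
  ultimately show ?thesis by simp
qed


lemma core_bounded:
  fixes \<xi> k :: "'a \<Rightarrow> real" and l g y K N :: real
  assumes P: "prob_space M" and G: "subalgebra M G"
    and xi: "\<xi> \<in> borel_measurable M"
    and symm: "\<And>z. z \<ge> 0 \<Longrightarrow> AE \<omega> in M. real_cond_exp M G (indicator {\<omega>' \<in> space M. \<xi> \<omega>' > z}) \<omega>
                  = real_cond_exp M G (indicator {\<omega>' \<in> space M. \<xi> \<omega>' < - z}) \<omega>"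
    and k: "k \<in> borel_measurable G" "\<And>\<omega>. 0 \<le> k \<omega>" "\<And>\<omega>. k \<omega> \<le> N"
    and g0: "g \<ge> 0"
    and pt: "\<And>t. exp (l*t - g*(t\<^sup>2 * (if \<bar>t\<bar> > y then 1 else 0))) + exp (l*(-t) - g*((-t)\<^sup>2 * (if \<bar>-t\<bar> > y then 1 else 0)))
               \<le> 2 * (1 + g * (t\<^sup>2 * (if \<bar>t\<bar> \<le> y then 1 else 0)))"
    and bd: "\<And>t. exp (l*t - g*(t\<^sup>2 * (if \<bar>t\<bar> > y then 1 else 0))) \<le> K"
    and y0: "y \<ge> 0"
  shows "(\<integral>\<^sup>+\<omega>. ennreal (k \<omega> * exp (l * \<xi> \<omega> - g * (real_cond_exp M G (\<lambda>\<omega>'. (\<xi> \<omega>')\<^sup>2 * indicator {\<omega>'' \<in> space M. \<bar>\<xi> \<omega>''\<bar> \<le> y} \<omega>') \<omega>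
            + (\<xi> \<omega>)\<^sup>2 * indicator {\<omega>'' \<in> space M. \<bar>\<xi> \<omega>''\<bar> > y} \<omega>))) \<partial>M)
         \<le> (\<integral>\<^sup>+\<omega>. ennreal (k \<omega>) \<partial>M)"
proof -
  interpret P: prob_space M by (rule P)
  interpret S: finite_measure_subalgebra M G by unfold_locales (rule G)
  have km[measurable]: "k \<in> borel_measurable M" by (rule measurable_from_subalg[OF G k(1)])
  have kG[measurable]: "k \<in> borel_measurable G" by (rule k(1))
  have xim[measurable]: "\<xi> \<in> borel_measurable M" by (rule xi)
  have N0: "0 \<le> N" using k(2)[of undefined] k(3)[of undefined] by linarith
  define f where "f = (\<lambda>\<omega>'. (\<xi> \<omega>')\<^sup>2 * indicator {\<omega>'' \<in> space M. \<bar>\<xi> \<omega>''\<bar> \<le> y} \<omega>')"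
  define C where "C = real_cond_exp M G f"
  define \<phi> where "\<phi> = (\<lambda>t. exp (l*t - g*(t\<^sup>2 * (if \<bar>t\<bar> > y then 1 else 0))))"
  have \<phi>m[measurable]: "\<phi> \<in> borel_measurable borel" unfolding \<phi>_def by measurable
  have Sy: "{\<omega>'' \<in> space M. \<bar>\<xi> \<omega>''\<bar> \<le> y} \<in> sets M" by measurable
  have fm[measurable]: "f \<in> borel_measurable M" unfolding f_def by measurable
  have f0: "\<And>\<omega>. 0 \<le> f \<omega>" unfolding f_def by (auto simp: indicator_def)
  have fb: "\<And>\<omega>. f \<omega> \<le> y\<^sup>2" unfolding f_def
    by (auto simp: indicator_def intro!: power_mono[of "\<bar>_\<bar>" y 2, simplified])
  have CG[measurable]: "C \<in> borel_measurable G" unfolding C_def by (rule borel_measurable_cond_exp)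
  have CM[measurable]: "C \<in> borel_measurable M" unfolding C_def by (rule borel_measurable_cond_exp2)
  have Cpos: "AE \<omega> in M. C \<omega> \<ge> 0" unfolding C_def by (rule S.real_cond_exp_pos) (use f0 in auto)
  define Ps where "Ps = {\<omega> \<in> space G. C \<omega> \<ge> 0}"
  have PsG[measurable]: "Ps \<in> sets G" unfolding Ps_def by measurable
  have spG: "space G = space M" using G by (simp add: subalgebra_def)
  have PsM[measurable]: "Ps \<in> sets M" using PsG G by (auto simp: subalgebra_def)
  define k1 where "k1 = (\<lambda>\<omega>. k \<omega> * indicator Ps \<omega> * exp (- g * C \<omega>))"
  have k1G[measurable]: "k1 \<in> borel_measurable G" unfolding k1_def by measurable
  have k1M[measurable]: "k1 \<in> borel_measurable M" by (rule measurable_from_subalg[OF G k1G])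
  have k10: "\<And>\<omega>. 0 \<le> k1 \<omega>" unfolding k1_def using k(2) by (auto simp: indicator_def)
  have k1N: "\<And>\<omega>. k1 \<omega> \<le> N"
  proof -
    fix \<omega>
    show "k1 \<omega> \<le> N"
    proof (cases "\<omega> \<in> Ps")
      case True
      then have "exp (- g * C \<omega>) \<le> 1" using g0 by (auto simp: Ps_def mult_nonneg_nonneg)
      then have "k \<omega> * exp (- g * C \<omega>) \<le> k \<omega> * 1" using k(2) by (intro mult_left_mono) auto
      then show ?thesis using True k(3)[of \<omega>] by (simp add: k1_def)
    qed (simp add: k1_def N0)
  qed
  have \<phi>0: "\<And>t. 0 \<le> \<phi> t" unfolding \<phi>_def by simp
  have \<phi>K: "\<And>t. \<phi> t \<le> K" unfolding \<phi>_def by (rule bd)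
  have bdint: "integrable M h" if [measurable]: "h \<in> borel_measurable M" and "\<And>\<omega>. \<bar>h \<omega>\<bar> \<le> B" for h :: "'a \<Rightarrow> real" and B :: real
    by (rule P.integrable_const_bound[where B=B]) (use that in auto)
  have I1: "integrable M (\<lambda>\<omega>. k1 \<omega> * \<phi> (\<xi> \<omega>))"
    by (rule bdint[of _ "N*K"]) (use N0 k10 k1N \<phi>0 \<phi>K in \<open>auto intro!: mult_mono simp: abs_mult\<close>)
  have I2: "integrable M (\<lambda>\<omega>. k1 \<omega> * \<phi> (- \<xi> \<omega>))"
    by (rule bdint[of _ "N*K"]) (use N0 k10 k1N \<phi>0 \<phi>K in \<open>auto intro!: mult_mono simp: abs_mult\<close>)
  have Ik1: "integrable M k1" by (rule bdint[of _ N]) (use k10 k1N in auto)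
  have Ik: "integrable M k" by (rule bdint[of _ N]) (use k in auto)
  have Ik1f: "integrable M (\<lambda>\<omega>. k1 \<omega> * f \<omega>)"
    by (rule bdint[of _ "N*y\<^sup>2"]) (use N0 k10 k1N f0 fb in \<open>auto intro!: mult_mono simp: abs_mult\<close>)
  have step1: "(\<integral>\<^sup>+\<omega>. ennreal (k \<omega> * exp (l * \<xi> \<omega> - g * (C \<omega>
            + (\<xi> \<omega>)\<^sup>2 * indicator {\<omega>'' \<in> space M. \<bar>\<xi> \<omega>''\<bar> > y} \<omega>))) \<partial>M)
      = (\<integral>\<^sup>+\<omega>. ennreal (k1 \<omega> * \<phi> (\<xi> \<omega>)) \<partial>M)"
  proof (rule nn_integral_cong_AE)
    show "AE \<omega> in M. ennreal (k \<omega> * exp (l * \<xi> \<omega> - g * (C \<omega>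
            + (\<xi> \<omega>)\<^sup>2 * indicator {\<omega>'' \<in> space M. \<bar>\<xi> \<omega>''\<bar> > y} \<omega>)))
      = ennreal (k1 \<omega> * \<phi> (\<xi> \<omega>))"
      using Cpos AE_space
    proof eventually_elim
      case (elim \<omega>)
      show ?case
      proof -
        have True: "\<omega> \<in> space M" using elim by simp
        then have "\<omega> \<in> Ps" using elim spG by (simp add: Ps_def)
        then have "k1 \<omega> * \<phi> (\<xi> \<omega>) = k \<omega> * (exp (- g * C \<omega>) * \<phi> (\<xi> \<omega>))" by (simp add: k1_def)
        also have "exp (- g * C \<omega>) * \<phi> (\<xi> \<omega>) = exp (l * \<xi> \<omega> - g * (C \<omega>
            + (\<xi> \<omega>)\<^sup>2 * indicator {\<omega>'' \<in> space M. \<bar>\<xi> \<omega>''\<bar> > y} \<omega>))"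
          using True by (simp add: \<phi>_def indicator_def exp_add[symmetric] algebra_simps)
        finally show ?thesis by simp
      qed
    qed
  qed
  have sym0: "(\<integral>\<^sup>+\<omega>. ennreal (k1 \<omega>) * ennreal (\<phi> (\<xi> \<omega>)) \<partial>M) = (\<integral>\<^sup>+\<omega>. ennreal (k1 \<omega>) * ennreal (\<phi> (- \<xi> \<omega>)) \<partial>M)"
    by (rule sym_nn[where \<psi>="\<lambda>t. ennreal (\<phi> t)", OF P G xi symm k1G k10 k1N]) measurable
  have sym1: "(\<integral>\<^sup>+\<omega>. ennreal (k1 \<omega> * \<phi> (\<xi> \<omega>)) \<partial>M) = (\<integral>\<^sup>+\<omega>. ennreal (k1 \<omega> * \<phi> (- \<xi> \<omega>)) \<partial>M)"
    using sym0 by (simp add: ennreal_mult k10 \<phi>0)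
  have r1: "(\<integral>\<^sup>+\<omega>. ennreal (k1 \<omega> * \<phi> (\<xi> \<omega>)) \<partial>M) = ennreal (\<integral>\<omega>. k1 \<omega> * \<phi> (\<xi> \<omega>) \<partial>M)"
    by (rule nn_integral_eq_integral[OF I1]) (use k10 \<phi>0 in auto)
  have r2: "(\<integral>\<^sup>+\<omega>. ennreal (k1 \<omega> * \<phi> (- \<xi> \<omega>)) \<partial>M) = ennreal (\<integral>\<omega>. k1 \<omega> * \<phi> (- \<xi> \<omega>) \<partial>M)"
    by (rule nn_integral_eq_integral[OF I2]) (use k10 \<phi>0 in auto)
  have nn1: "0 \<le> (\<integral>\<omega>. k1 \<omega> * \<phi> (\<xi> \<omega>) \<partial>M)" by (rule integral_nonneg_AE) (use k10 \<phi>0 in auto)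
  have nn2: "0 \<le> (\<integral>\<omega>. k1 \<omega> * \<phi> (- \<xi> \<omega>) \<partial>M)" by (rule integral_nonneg_AE) (use k10 \<phi>0 in auto)
  have realeq: "(\<integral>\<omega>. k1 \<omega> * \<phi> (\<xi> \<omega>) \<partial>M) = (\<integral>\<omega>. k1 \<omega> * \<phi> (- \<xi> \<omega>) \<partial>M)"
    using sym1 r1 r2 nn1 nn2 by simp
  have le1: "(\<integral>\<omega>. k1 \<omega> * \<phi> (\<xi> \<omega>) \<partial>M) + (\<integral>\<omega>. k1 \<omega> * \<phi> (- \<xi> \<omega>) \<partial>M)
      \<le> 2 * (\<integral>\<omega>. k1 \<omega> \<partial>M) + 2 * g * (\<integral>\<omega>. k1 \<omega> * f \<omega> \<partial>M)"
  proof -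
    have "(\<integral>\<omega>. k1 \<omega> * \<phi> (\<xi> \<omega>) \<partial>M) + (\<integral>\<omega>. k1 \<omega> * \<phi> (- \<xi> \<omega>) \<partial>M)
        = (\<integral>\<omega>. k1 \<omega> * \<phi> (\<xi> \<omega>) + k1 \<omega> * \<phi> (- \<xi> \<omega>) \<partial>M)"
      by (rule Bochner_Integration.integral_add[OF I1 I2, symmetric])
    also have "\<dots> \<le> (\<integral>\<omega>. 2 * k1 \<omega> + 2 * g * (k1 \<omega> * f \<omega>) \<partial>M)"
    proof (rule integral_mono)
      show "integrable M (\<lambda>\<omega>. k1 \<omega> * \<phi> (\<xi> \<omega>) + k1 \<omega> * \<phi> (- \<xi> \<omega>))" using I1 I2 by simp
      show "integrable M (\<lambda>\<omega>. 2 * k1 \<omega> + 2 * g * (k1 \<omega> * f \<omega>))" using Ik1 Ik1f by simp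
      fix \<omega> assume om: "\<omega> \<in> space M"
      have "\<phi> (\<xi> \<omega>) + \<phi> (- \<xi> \<omega>) \<le> 2 * (1 + g * f \<omega>)"
        using pt[of "\<xi> \<omega>"] om unfolding \<phi>_def f_def by (cases "y < \<bar>\<xi> \<omega>\<bar>") (simp_all add: indicator_def)
      then have "k1 \<omega> * (\<phi> (\<xi> \<omega>) + \<phi> (- \<xi> \<omega>)) \<le> k1 \<omega> * (2 * (1 + g * f \<omega>))"
        using k10 by (intro mult_left_mono) auto
      then show "k1 \<omega> * \<phi> (\<xi> \<omega>) + k1 \<omega> * \<phi> (- \<xi> \<omega>) \<le> 2 * k1 \<omega> + 2 * g * (k1 \<omega> * f \<omega>)"
        by (simp add: algebra_simps)
    qed
    also have "\<dots> = 2 * (\<integral>\<omega>. k1 \<omega> \<partial>M) + 2 * g * (\<integral>\<omega>. k1 \<omega> * f \<omega> \<partial>M)"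
      using Ik1 Ik1f by simp
    finally show ?thesis .
  qed
  have condeq: "(\<integral>\<omega>. k1 \<omega> * f \<omega> \<partial>M) = (\<integral>\<omega>. k1 \<omega> * C \<omega> \<partial>M)"
    unfolding C_def by (rule S.real_cond_exp_intg(2)[OF Ik1f k1G fm, symmetric])
  have IC: "integrable M (\<lambda>\<omega>. k1 \<omega> * C \<omega>)"
    unfolding C_def by (rule S.real_cond_exp_intg(1)[OF Ik1f k1G fm])
  have IkP: "integrable M (\<lambda>\<omega>. k \<omega> * indicator Ps \<omega>)"
    by (rule bdint[of _ N]) (use N0 k in \<open>auto simp: indicator_def\<close>)
  have le2: "(\<integral>\<omega>. k1 \<omega> \<partial>M) + g * (\<integral>\<omega>. k1 \<omega> * C \<omega> \<partial>M) \<le> (\<integral>\<omega>. k \<omega> \<partial>M)"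
  proof -
    have "(\<integral>\<omega>. k1 \<omega> \<partial>M) + g * (\<integral>\<omega>. k1 \<omega> * C \<omega> \<partial>M) = (\<integral>\<omega>. k1 \<omega> + g * (k1 \<omega> * C \<omega>) \<partial>M)"
      using Ik1 IC by simp
    also have "\<dots> \<le> (\<integral>\<omega>. k \<omega> * indicator Ps \<omega> \<partial>M)"
    proof (rule integral_mono)
      show "integrable M (\<lambda>\<omega>. k1 \<omega> + g * (k1 \<omega> * C \<omega>))" using Ik1 IC by simp
      show "integrable M (\<lambda>\<omega>. k \<omega> * indicator Ps \<omega>)" by (rule IkP)
      fix \<omega> assume om: "\<omega> \<in> space M"
      have "k1 \<omega> + g * (k1 \<omega> * C \<omega>) = k1 \<omega> * (1 + g * C \<omega>)" by (simp add: algebra_simps)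
      also have "\<dots> \<le> k1 \<omega> * exp (g * C \<omega>)"
        using k10 exp_ge_add_one_self[of "g * C \<omega>"] by (intro mult_left_mono) auto
      also have "\<dots> = k \<omega> * indicator Ps \<omega>"
        by (simp add: k1_def exp_minus_inverse mult.assoc exp_minus[symmetric] exp_add[symmetric])
      finally show "k1 \<omega> + g * (k1 \<omega> * C \<omega>) \<le> k \<omega> * indicator Ps \<omega>" .
    qed
    also have "\<dots> \<le> (\<integral>\<omega>. k \<omega> \<partial>M)"
      by (rule integral_mono[OF IkP Ik]) (use k in \<open>auto simp: indicator_def\<close>)
    finally show ?thesis .
  qed
  have I1le: "(\<integral>\<omega>. k1 \<omega> * \<phi> (\<xi> \<omega>) \<partial>M) \<le> (\<integral>\<omega>. k \<omega> \<partial>M)"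
  proof -
    have "(\<integral>\<omega>. k1 \<omega> * \<phi> (\<xi> \<omega>) \<partial>M) + (\<integral>\<omega>. k1 \<omega> * \<phi> (- \<xi> \<omega>) \<partial>M)
      \<le> 2 * ((\<integral>\<omega>. k1 \<omega> \<partial>M) + g * (\<integral>\<omega>. k1 \<omega> * C \<omega> \<partial>M))"
      using le1 condeq by (simp add: algebra_simps)
    then show ?thesis using le2 realeq by (smt (verit))
  qed
  have "(\<integral>\<^sup>+\<omega>. ennreal (k \<omega> * exp (l * \<xi> \<omega> - g * (real_cond_exp M G f \<omega>
            + (\<xi> \<omega>)\<^sup>2 * indicator {\<omega>'' \<in> space M. \<bar>\<xi> \<omega>''\<bar> > y} \<omega>))) \<partial>M)
      = ennreal (\<integral>\<omega>. k1 \<omega> * \<phi> (\<xi> \<omega>) \<partial>M)" using step1 r1 by (simp add: C_def)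
  also have "\<dots> \<le> ennreal (\<integral>\<omega>. k \<omega> \<partial>M)" using I1le by (rule ennreal_leI)
  also have "\<dots> = (\<integral>\<^sup>+\<omega>. ennreal (k \<omega>) \<partial>M)"
    by (rule nn_integral_eq_integral[OF Ik, symmetric]) (use k in auto)
  finally show ?thesis unfolding f_def .
qed


lemma core:
  fixes \<xi> k :: "'a \<Rightarrow> real" and l g y K :: real
  assumes P: "prob_space M" and G: "subalgebra M G"
    and xi: "\<xi> \<in> borel_measurable M"
    and symm: "\<And>z. z \<ge> 0 \<Longrightarrow> AE \<omega> in M. real_cond_exp M G (indicator {\<omega>' \<in> space M. \<xi> \<omega>' > z}) \<omega>
                  = real_cond_exp M G (indicator {\<omega>' \<in> space M. \<xi> \<omega>' < - z}) \<omega>"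
    and k: "k \<in> borel_measurable G" "\<And>\<omega>. 0 \<le> k \<omega>"
    and g0: "g \<ge> 0"
    and pt: "\<And>t. exp (l*t - g*(t\<^sup>2 * (if \<bar>t\<bar> > y then 1 else 0))) + exp (l*(-t) - g*((-t)\<^sup>2 * (if \<bar>-t\<bar> > y then 1 else 0)))
               \<le> 2 * (1 + g * (t\<^sup>2 * (if \<bar>t\<bar> \<le> y then 1 else 0)))"
    and bd: "\<And>t. exp (l*t - g*(t\<^sup>2 * (if \<bar>t\<bar> > y then 1 else 0))) \<le> K"
    and y0: "y \<ge> 0"
  shows "(\<integral>\<^sup>+\<omega>. ennreal (k \<omega> * exp (l * \<xi> \<omega> - g * (real_cond_exp M G (\<lambda>\<omega>'. (\<xi> \<omega>')\<^sup>2 * indicator {\<omega>'' \<in> space M. \<bar>\<xi> \<omega>''\<bar> \<le> y} \<omega>') \<omega>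
            + (\<xi> \<omega>)\<^sup>2 * indicator {\<omega>'' \<in> space M. \<bar>\<xi> \<omega>''\<bar> > y} \<omega>))) \<partial>M)
         \<le> (\<integral>\<^sup>+\<omega>. ennreal (k \<omega>) \<partial>M)"
proof -
  have km[measurable]: "k \<in> borel_measurable M" by (rule measurable_from_subalg[OF G k(1)])
  have kG[measurable]: "k \<in> borel_measurable G" by (rule k(1))
  have xim[measurable]: "\<xi> \<in> borel_measurable M" by (rule xi)
  define Dw where "Dw = (\<lambda>\<omega>. exp (l * \<xi> \<omega> - g * (real_cond_exp M G (\<lambda>\<omega>'. (\<xi> \<omega>')\<^sup>2 * indicator {\<omega>'' \<in> space M. \<bar>\<xi> \<omega>''\<bar> \<le> y} \<omega>') \<omega>
            + (\<xi> \<omega>)\<^sup>2 * indicator {\<omega>'' \<in> space M. \<bar>\<xi> \<omega>''\<bar> > y} \<omega>)))"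
  have Dwm[measurable]: "Dw \<in> borel_measurable M" unfolding Dw_def by measurable
  have Dw0: "\<And>\<omega>. 0 \<le> Dw \<omega>" unfolding Dw_def by simp
  define fn where "fn = (\<lambda>n::nat. \<lambda>\<omega>. ennreal (min (k \<omega>) (real n) * Dw \<omega>))"
  have fnm[measurable]: "fn n \<in> borel_measurable M" for n unfolding fn_def by measurable
  have inc: "incseq fn"
    unfolding fn_def incseq_def le_fun_def
    by (auto intro!: ennreal_leI mult_right_mono Dw0)
  have sup: "(SUP n. fn n \<omega>) = ennreal (k \<omega> * Dw \<omega>)" for \<omega>
  proof (rule antisym)
    show "(SUP n. fn n \<omega>) \<le> ennreal (k \<omega> * Dw \<omega>)"
      unfolding fn_def by (intro SUP_least ennreal_leI mult_right_mono Dw0) auto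
    have "real (nat \<lceil>k \<omega>\<rceil>) \<ge> k \<omega>" by linarith
    then have "fn (nat \<lceil>k \<omega>\<rceil>) \<omega> = ennreal (k \<omega> * Dw \<omega>)" unfolding fn_def by simp
    then show "ennreal (k \<omega> * Dw \<omega>) \<le> (SUP n. fn n \<omega>)" by (metis SUP_upper UNIV_I)
  qed
  have bnd: "integral\<^sup>N M (fn n) \<le> (\<integral>\<^sup>+\<omega>. ennreal (k \<omega>) \<partial>M)" for n
  proof -
    have "integral\<^sup>N M (fn n) \<le> (\<integral>\<^sup>+\<omega>. ennreal (min (k \<omega>) (real n)) \<partial>M)"
      unfolding fn_def Dw_def
      by (rule core_bounded[where N="real n", OF P G xi symm _ _ _ g0 pt bd y0]) (use k in auto)
    also have "\<dots> \<le> (\<integral>\<^sup>+\<omega>. ennreal (k \<omega>) \<partial>M)"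
      by (intro nn_integral_mono ennreal_leI) auto
    finally show ?thesis .
  qed
  have "(\<integral>\<^sup>+\<omega>. ennreal (k \<omega> * Dw \<omega>) \<partial>M) = (\<integral>\<^sup>+\<omega>. (SUP n. fn n \<omega>) \<partial>M)" by (simp add: sup)
  also have "\<dots> = (SUP n. integral\<^sup>N M (fn n))" by (rule nn_integral_monotone_convergence_SUP[OF inc fnm])
  also have "\<dots> \<le> (\<integral>\<^sup>+\<omega>. ennreal (k \<omega>) \<partial>M)" by (rule SUP_least[OF bnd])
  finally show ?thesis unfolding Dw_def .
qed

lemma fact_double_ge: "2^m * fact m \<le> (fact (2*m) :: real)"
proof (induction m)
  case 0 then show ?case by simp
next
  case (Suc m)
  have e: "2 * Suc m = Suc (Suc (2*m))" by simp
  have f0: "(fact (2*m) :: real) \<ge> 0" by simp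
  have "(fact (2*Suc m) :: real) = (2*real m+2)*((2*real m+1)*fact (2*m))"
    unfolding e fact_Suc by (simp add: algebra_simps)
  also have "\<dots> \<ge> (2*real m+2) * fact (2*m)" using f0
    by (intro mult_left_mono) (auto intro: mult_right_mono[of 1 _ "fact (2*m)", simplified])
  finally have "(fact (2*Suc m) :: real) \<ge> (2*real m+2) * fact (2*m)" .
  moreover have "(2*real m+2) * fact (2*m) \<ge> (2*real m+2) * (2^m * fact m :: real)"
    using Suc by (intro mult_left_mono) auto
  moreover have "(2*real m+2) * (2^m * fact m :: real) = 2^Suc m * fact (Suc m)"
    by (simp add: algebra_simps)
  ultimately show ?case by linarith
qed

lemma cosh_series: "(\<lambda>n. if even n then x ^ n / fact n else 0) sums cosh (x::real)"
proof -
  have "(\<lambda>n. if even n then x ^ n /\<^sub>R fact n else 0) = (\<lambda>n. if even n then x ^ n / fact n else 0)"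
    by (simp add: fun_eq_iff divide_inverse_commute)
  with cosh_converges[of x] show ?thesis by simp
qed

lemma exp_series: "(\<lambda>n. x ^ n / fact n) sums exp (x::real)"
proof -
  have "(\<lambda>n. x ^ n /\<^sub>R fact n) = (\<lambda>n. x ^ n / fact n)"
    by (simp add: fun_eq_iff divide_inverse_commute)
  with exp_converges[of x] show ?thesis by simp
qed

lemma cosh_le_exp_sq: "cosh (u::real) \<le> exp (u^2/2)"
proof -
  have e: "(\<lambda>m. (u^2/2)^m / fact m) sums exp (u^2/2)"
    by (rule exp_series)
  have e2: "(\<lambda>n. if even n then (u^2/2)^(n div 2) / fact (n div 2) else 0) sums exp (u^2/2)"
    using sums_if[OF sums_zero e] by simp
  have c: "(\<lambda>n. if even n then u ^ n / fact n else 0) sums cosh u"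
    by (rule cosh_series)
  show ?thesis
  proof (rule sums_le[OF _ c e2])
    fix n
    show "(if even n then u ^ n / fact n else 0) \<le> (if even n then (u^2/2)^(n div 2) / fact (n div 2) else 0)"
    proof (cases "even n")
      case True
      then obtain m where n: "n = 2*m" by blast
      have p: "u ^ n = (u^2)^m" by (simp add: n power_mult)
      have "(u^2)^m / fact (2*m) \<le> (u^2)^m / (2^m * fact m)"
        by (intro divide_left_mono fact_double_ge) auto
      also have "\<dots> = (u^2/2)^m / fact m" by (simp add: power_divide)
      finally have "u ^ n / fact n \<le> (u^2/2)^m / fact m" using p n by simp
      moreover have "n div 2 = m" using n by simp
      ultimately show ?thesis using True by simp
    qed simp
  qed
qed

lemma cosh_ge_sq: "1 + u^2/2 \<le> cosh (u::real)"
proof -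
  have c: "(\<lambda>n. if even n then u ^ n / fact n else 0) sums cosh u"
    by (rule cosh_series)
  have "(\<Sum>n\<in>{0,1,2}. (if even n then u ^ n / fact n else 0)) \<le> (\<Sum>n. (if even n then u ^ n / fact n else 0))"
    by (rule sum_le_suminf) (use c sums_summable in \<open>auto simp: zero_le_even_power\<close>)
  then show ?thesis using sums_unique[OF c] by (simp add: numeral_2_eq_2)
qed

lemma cosh_scale:
  fixes t y l :: real
  assumes "\<bar>t\<bar> \<le> y" "y > 0"
  shows "cosh (l*t) \<le> 1 + t^2 * ((cosh (l*y) - 1)/y^2)"
proof -
  define r where "r = t^2/y^2"
  have "t^2 \<le> y^2" using assms power_mono[of "\<bar>t\<bar>" y 2] by simp
  then have r0: "0 \<le> r" and r1: "r \<le> 1" using assms by (auto simp: r_def)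
  have c: "\<And>x. (\<lambda>n. if even n then x ^ n / fact n else 0) sums cosh (x::real)"
    by (rule cosh_series)
  have b: "(\<lambda>n. r * (if even n then (l*y) ^ n / fact n else 0) + (if n = 0 then 1 - r else 0)) sums (r * cosh (l*y) + (1 - r))"
    by (intro sums_add sums_mult c) (rule sums_single)
  have "cosh (l*t) \<le> r * cosh (l*y) + (1 - r)"
  proof (rule sums_le[OF _ c b])
    fix n
    show "(if even n then (l*t) ^ n / fact n else 0) \<le> r * (if even n then (l*y) ^ n / fact n else 0) + (if n = 0 then 1 - r else 0)"
    proof (cases "even n \<and> n \<noteq> 0")
      case True
      then obtain m where n: "n = 2*m" and m: "m \<ge> 1" by (metis dvdE less_one not_less mult_0_right)
      have "(l*t)^n = (t^2/y^2)^m * (l*y)^n" using assms(2) by (simp add: n power_mult power_mult_distrib power_divide)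
      also have "\<dots> \<le> r * (l*y)^n"
      proof (intro mult_right_mono)
        show "(t^2/y^2)^m \<le> r" unfolding r_def[symmetric] using power_decreasing[of 1 m r] r0 r1 m by simp
        show "0 \<le> (l*y)^n" using n by (simp add: zero_le_even_power)
      qed
      finally have "(l*t)^n \<le> r * (l*y)^n" .
      then have "(l*t)^n / fact n \<le> r * (l*y)^n / fact n" by (intro divide_right_mono) auto
      then show ?thesis using True by simp
    next
      case False
      then show ?thesis using r1 by auto
    qed
  qed
  moreover have "r * cosh (l*y) + (1 - r) = 1 + t^2 * ((cosh (l*y) - 1)/y^2)" using assms by (simp add: r_def field_simps)
  ultimately show ?thesis by simp
qed


lemma g_ge:
  fixes l y :: real
  assumes "y \<ge> 0"
  shows "(if y = 0 then l\<^sup>2/2 else (cosh (l*y) - 1)/y\<^sup>2) \<ge> l\<^sup>2/2"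
proof (cases "y = 0")
  case False
  then have yp: "y > 0" using assms by simp
  have "1 + (l*y)\<^sup>2/2 \<le> cosh (l*y)" by (rule cosh_ge_sq)
  then have "l\<^sup>2/2 * y\<^sup>2 \<le> cosh (l*y) - 1" by (simp add: power_mult_distrib algebra_simps)
  then have "l\<^sup>2/2 \<le> (cosh (l*y) - 1)/y\<^sup>2" using yp by (simp add: pos_le_divide_eq)
  then show ?thesis using False by simp
qed simp

lemma pt_ineq:
  fixes l y g t :: real
  assumes "y \<ge> 0" and gdef: "g = (if y = 0 then l\<^sup>2/2 else (cosh (l*y) - 1)/y\<^sup>2)"
  shows "exp (l*t - g*(t\<^sup>2 * (if \<bar>t\<bar> > y then 1 else 0))) + exp (l*(-t) - g*((-t)\<^sup>2 * (if \<bar>-t\<bar> > y then 1 else 0)))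
               \<le> 2 * (1 + g * (t\<^sup>2 * (if \<bar>t\<bar> \<le> y then 1 else 0)))"
proof -
  have gl: "g \<ge> l\<^sup>2/2" using g_ge[OF assms(1), of l] gdef by simp
  have ch: "exp (l*t) + exp (-(l*t)) = 2 * cosh (l*t)" by (simp add: cosh_field_def)
  show ?thesis
  proof (cases "\<bar>t\<bar> > y")
    case True
    have "exp (l*t - g*t\<^sup>2) + exp (l*(-t) - g*t\<^sup>2) = (exp (l*t) + exp (-(l*t))) * exp (- g*t\<^sup>2)"
      by (simp add: exp_diff exp_minus field_simps)
    also have "\<dots> = 2 * cosh (l*t) * exp (- g*t\<^sup>2)" using ch by simp
    also have "\<dots> \<le> 2 * exp ((l*t)\<^sup>2/2) * exp (- g*t\<^sup>2)"
      using cosh_le_exp_sq[of "l*t"] by (intro mult_right_mono) auto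
    also have "\<dots> = 2 * exp ((l*t)\<^sup>2/2 - g*t\<^sup>2)"
      by (simp add: exp_add[symmetric])
    also have "\<dots> \<le> 2 * exp 0"
    proof -
      have "(l*t)\<^sup>2/2 = l\<^sup>2/2 * t\<^sup>2" by (simp add: power_mult_distrib)
      also have "\<dots> \<le> g * t\<^sup>2" using gl by (intro mult_right_mono) auto
      finally show ?thesis by simp
    qed
    finally show ?thesis using True by simp
  next
    case False
    then have tl: "\<bar>t\<bar> \<le> y" by simp
    have "cosh (l*t) \<le> 1 + g * t\<^sup>2"
    proof (cases "y = 0")
      case True then show ?thesis using tl by simp
    next
      case False
      then have "y > 0" using assms by simp
      then show ?thesis using cosh_scale[OF tl, of l] assms False by (simp add: mult.commute)
    qed
    then show ?thesis using False ch by simp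
  qed
qed

lemma bd_ineq:
  fixes l y g t :: real
  assumes "l > 0" "g > 0"
  shows "exp (l*t - g*(t\<^sup>2 * (if \<bar>t\<bar> > y then 1 else 0))) \<le> exp (l*y) + exp (l\<^sup>2/(4*g))"
proof (cases "\<bar>t\<bar> > y")
  case True
  have "0 \<le> (2*g*t - l)\<^sup>2" by simp
  then have "4*g*(l*t - g*t\<^sup>2) \<le> l\<^sup>2" by (simp add: power2_eq_square algebra_simps)
  then have "l*t - g*t\<^sup>2 \<le> l\<^sup>2/(4*g)" using assms by (simp add: pos_le_divide_eq mult.commute)
  then have "exp (l*t - g*t\<^sup>2) \<le> exp (l\<^sup>2/(4*g))" by simp
  then show ?thesis using True by (simp add: add_increasing)
next
  case False
  then have "l * t \<le> l * y" using assms by (intro mult_left_mono) auto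
  then have "exp (l*t) \<le> exp (l*y)" by simp
  then show ?thesis using False by (simp add: add_increasing2)
qed

theorem theorem2p3:
  fixes M :: "'a measure" and F :: "nat \<Rightarrow> 'a measure"
    and \<xi> :: "nat \<Rightarrow> 'a \<Rightarrow> real" and n :: nat and x y v :: real
  assumes prob: "prob_space M"
    and sub: "\<And>i. i \<le> n \<Longrightarrow> subalgebra M (F i)"
    and F0: "sets (F 0) = {{}, space M}"
    and mono: "\<And>i j. i \<le> j \<Longrightarrow> j \<le> n \<Longrightarrow> sets (F i) \<subseteq> sets (F j)"
    and meas: "\<And>i. i \<in> {1..n} \<Longrightarrow> \<xi> i \<in> borel_measurable (F i)"
    and intg: "\<And>i. i \<in> {1..n} \<Longrightarrow> integrable M (\<xi> i)"
    and mart: "\<And>i. i \<in> {1..n} \<Longrightarrow> AE \<omega> in M. real_cond_exp M (F (i - 1)) (\<xi> i) \<omega> = 0"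
    and symm: "\<And>i z. i \<in> {1..n} \<Longrightarrow> z \<ge> 0 \<Longrightarrow>
       AE \<omega> in M. real_cond_exp M (F (i - 1)) (indicator {\<omega>' \<in> space M. \<xi> i \<omega>' > z}) \<omega>
                  = real_cond_exp M (F (i - 1)) (indicator {\<omega>' \<in> space M. \<xi> i \<omega>' < - z}) \<omega>"
    and x: "x > 0" and v: "v > 0" and y: "y \<ge> 0"
  shows "measure M {\<omega> \<in> space M. \<exists>k\<in>{1..n}.
            (\<Sum>i=1..k. \<xi> i \<omega>) \<ge> x \<and>
            (\<Sum>i=1..k. real_cond_exp M (F (i - 1))
                          (\<lambda>\<omega>'. (\<xi> i \<omega>')\<^sup>2 * indicator {\<omega>'' \<in> space M. \<bar>\<xi> i \<omega>''\<bar> \<le> y} \<omega>') \<omega>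
                        + (\<xi> i \<omega>)\<^sup>2 * indicator {\<omega>'' \<in> space M. \<bar>\<xi> i \<omega>''\<bar> > y} \<omega>) \<le> v\<^sup>2}
         \<le> B0 x y v"
  proof -
  interpret P: prob_space M by (rule prob)
  obtain l g where l0: "l > 0" and gdef: "g = (if y = 0 then l\<^sup>2/2 else (cosh (l*y) - 1)/y\<^sup>2)"
    and Bx: "B0 x y v = exp (- l*x + g* v\<^sup>2)"
  proof (cases "y = 0")
    case True
    have "- (x\<^sup>2) / (2 * v\<^sup>2) = - (x/v\<^sup>2)*x + ((x/v\<^sup>2)\<^sup>2/2)* v\<^sup>2"
      using v by (simp add: field_simps power2_eq_square)
    then show ?thesis
      by (intro that[of "x/v\<^sup>2" "(x/v\<^sup>2)\<^sup>2/2"]) (use True x v in \<open>auto simp: B0_def\<close>)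
  next
    case False
    then have yp: "y > 0" using y by simp
    define lam where "lam = (1 / y) * ln (sqrt (1 + x\<^sup>2 * y\<^sup>2 / v ^ 4) + x * y / v\<^sup>2)"
    have s1: "sqrt (1 + x\<^sup>2 * y\<^sup>2 / v ^ 4) \<ge> 1" by simp
    have s2: "x * y / v\<^sup>2 > 0" using x yp v by simp
    have "ln (sqrt (1 + x\<^sup>2 * y\<^sup>2 / v ^ 4) + x * y / v\<^sup>2) > 0" using s1 s2 by (intro ln_gt_zero) linarith
    then have lp: "lam > 0" using yp by (simp add: lam_def)
    show ?thesis
      by (intro that[of lam "(cosh (lam*y) - 1)/y\<^sup>2"]) (use False lp in \<open>simp_all add: B0_def lam_def Let_def\<close>)
  qed
  have gl: "g \<ge> l\<^sup>2/2" using g_ge[OF y, of l] gdef by simp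
  have "l\<^sup>2 > 0" using l0 by simp
  then have gpos: "g > 0" using gl by linarith
  have g0: "g \<ge> 0" using gpos by simp
  note pt = pt_ineq[OF y gdef]
  note bd = bd_ineq[OF l0 gpos, of _ y]
  define S where "S k \<omega> = (\<Sum>i=1..k. \<xi> i \<omega>)" for k \<omega>
  define Mk where "Mk k \<omega> = (\<Sum>i=1..k. real_cond_exp M (F (i - 1))
                          (\<lambda>\<omega>'. (\<xi> i \<omega>')\<^sup>2 * indicator {\<omega>'' \<in> space M. \<bar>\<xi> i \<omega>''\<bar> \<le> y} \<omega>') \<omega>
                        + (\<xi> i \<omega>)\<^sup>2 * indicator {\<omega>'' \<in> space M. \<bar>\<xi> i \<omega>''\<bar> > y} \<omega>)" for k \<omega>
  define Z where "Z k \<omega> = exp (l * S k \<omega> - g * Mk k \<omega>)" for k \<omega>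
  define E where "E k = {\<omega> \<in> space M. x \<le> S k \<omega> \<and> Mk k \<omega> \<le> v\<^sup>2}" for k
  define Bs where "Bs m = space M - (\<Union>j\<in>{1..m}. E j)" for m
  define As where "As k = E k - (\<Union>j\<in>{1..<k}. E j)" for k
  have spF: "space (F i) = space M" if "i \<le> n" for i using sub[OF that] by (simp add: subalgebra_def)
  have subF: "subalgebra (F j) (F i)" if "i \<le> j" "j \<le> n" for i j
    using mono[OF that] spF[of i] spF[of j] that by (simp add: subalgebra_def)
  have xiF: "\<xi> i \<in> borel_measurable (F j)" if "i \<in> {1..j}" "j \<le> n" for i j
    using measurable_from_subalg[OF subF[of i j] meas[of i]] that by auto
  have CF: "real_cond_exp M (F (i - 1)) f \<in> borel_measurable (F j)" if "i \<in> {1..j}" "j \<le> n" for i j f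
    using measurable_from_subalg[OF subF[of "i - 1" j] borel_measurable_cond_exp] that by auto
  have SF: "S k \<in> borel_measurable (F j)" if "k \<le> j" "j \<le> n" for k j
    unfolding S_def by (rule borel_measurable_sum) (use that in \<open>auto intro!: xiF\<close>)
  have termF: "(\<lambda>\<omega>. real_cond_exp M (F (i - 1))
                          (\<lambda>\<omega>'. (\<xi> i \<omega>')\<^sup>2 * indicator {\<omega>'' \<in> space M. \<bar>\<xi> i \<omega>''\<bar> \<le> y} \<omega>') \<omega>
                        + (\<xi> i \<omega>)\<^sup>2 * indicator {\<omega>'' \<in> space M. \<bar>\<xi> i \<omega>''\<bar> > y} \<omega>) \<in> borel_measurable (F j)"
    if ij: "i \<in> {1..j}" "j \<le> n" for i j
  proof -
    note xm[measurable] = xiF[OF ij]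
    note cm[measurable] = CF[OF ij]
    have eq: "{\<omega>'' \<in> space M. \<bar>\<xi> i \<omega>''\<bar> > y} = {\<omega>'' \<in> space (F j). \<bar>\<xi> i \<omega>''\<bar> > y}" using spF[OF ij(2)] by simp
    show ?thesis unfolding eq by measurable
  qed
  have MkF: "Mk k \<in> borel_measurable (F j)" if "k \<le> j" "j \<le> n" for k j
    unfolding Mk_def by (rule borel_measurable_sum, rule termF) (use that in auto)
  have ZF: "Z k \<in> borel_measurable (F j)" if "k \<le> j" "j \<le> n" for k j
  proof -
    note [measurable] = SF[OF that] MkF[OF that]
    show ?thesis unfolding Z_def by measurable
  qed
  have EF: "E k \<in> sets (F j)" if "k \<le> j" "j \<le> n" for k j
  proof -
    note [measurable] = SF[OF that] MkF[OF that]
    have "E k = {\<omega> \<in> space (F j). x \<le> S k \<omega> \<and> Mk k \<omega> \<le> v\<^sup>2}" using spF[OF that(2)] by (simp add: E_def)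
    also have "\<dots> \<in> sets (F j)" by measurable
    finally show ?thesis .
  qed
  have BsF: "Bs m \<in> sets (F m)" if "m \<le> n" for m
  proof -
    have "Bs m = space (F m) - (\<Union>j\<in>{1..m}. E j)" using spF[OF that] by (simp add: Bs_def)
    also have "\<dots> \<in> sets (F m)" using EF that by (intro sets.Diff sets.top sets.finite_UN) auto
    finally show ?thesis .
  qed
  have AsF: "As k \<in> sets (F k)" if "k \<le> n" for k
    unfolding As_def using EF that by (intro sets.Diff sets.finite_UN) auto
  have toM: "A \<in> sets M" if "A \<in> sets (F j)" "j \<le> n" for A j
    using sub[OF that(2)] that(1) by (auto simp: subalgebra_def)
  have ZM: "Z k \<in> borel_measurable M" if "k \<le> n" for k
    using measurable_from_subalg[OF sub[of n] ZF[OF that order_refl]] by simp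
  have Z0: "\<And>k \<omega>. 0 \<le> Z k \<omega>" unfolding Z_def by simp
  have inv: "(\<Sum>k=1..m. \<integral>\<^sup>+\<omega>. ennreal (Z k \<omega> * indicator (As k) \<omega>) \<partial>M)
      + (\<integral>\<^sup>+\<omega>. ennreal (Z m \<omega> * indicator (Bs m) \<omega>) \<partial>M) \<le> 1" if "m \<le> n" for m
    using that
  proof (induction m)
    case 0
    have "Bs 0 = space M" by (simp add: Bs_def)
    moreover have "Z 0 \<omega> = 1" for \<omega> by (simp add: Z_def S_def Mk_def)
    ultimately show ?case by (simp add: P.emeasure_space_1 ennreal_indicator)
  next
    case (Suc m)
    have mn: "m \<le> n" using Suc.prems by simp
    define D where "D \<omega> = exp (l * \<xi> (Suc m) \<omega> - g * (real_cond_exp M (F m)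
          (\<lambda>\<omega>'. (\<xi> (Suc m) \<omega>')\<^sup>2 * indicator {\<omega>'' \<in> space M. \<bar>\<xi> (Suc m) \<omega>''\<bar> \<le> y} \<omega>') \<omega>
          + (\<xi> (Suc m) \<omega>)\<^sup>2 * indicator {\<omega>'' \<in> space M. \<bar>\<xi> (Suc m) \<omega>''\<bar> > y} \<omega>))" for \<omega>
    have split: "Z (Suc m) \<omega> = Z m \<omega> * D \<omega>" for \<omega>
      by (simp add: Z_def S_def Mk_def D_def exp_add[symmetric] algebra_simps)
    have xiM: "\<xi> (Suc m) \<in> borel_measurable M"
      using measurable_from_subalg[OF sub[of "Suc m"] meas[of "Suc m"]] Suc.prems by auto
    have symm': "AE \<omega> in M. real_cond_exp M (F m) (indicator {\<omega>' \<in> space M. \<xi> (Suc m) \<omega>' > z}) \<omega>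
                  = real_cond_exp M (F m) (indicator {\<omega>' \<in> space M. \<xi> (Suc m) \<omega>' < - z}) \<omega>" if "z \<ge> 0" for z
      using symm[of "Suc m" z] that Suc.prems by simp
    have kF: "(\<lambda>\<omega>. Z m \<omega> * indicator (Bs m) \<omega>) \<in> borel_measurable (F m)"
      using ZF[OF order_refl mn] BsF[OF mn] by measurable
    have step: "(\<integral>\<^sup>+\<omega>. ennreal (Z (Suc m) \<omega> * indicator (Bs m) \<omega>) \<partial>M)
        \<le> (\<integral>\<^sup>+\<omega>. ennreal (Z m \<omega> * indicator (Bs m) \<omega>) \<partial>M)"
    proof -
      have "(\<integral>\<^sup>+\<omega>. ennreal (Z (Suc m) \<omega> * indicator (Bs m) \<omega>) \<partial>M)
          = (\<integral>\<^sup>+\<omega>. ennreal ((Z m \<omega> * indicator (Bs m) \<omega>) * D \<omega>) \<partial>M)"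
        by (simp add: split mult_ac)
      also have "\<dots> \<le> (\<integral>\<^sup>+\<omega>. ennreal (Z m \<omega> * indicator (Bs m) \<omega>) \<partial>M)"
        unfolding D_def
        by (rule core[OF prob sub[OF mn] xiM symm' kF _ g0 pt bd y]) (auto simp: Z0)
      finally show ?thesis .
    qed
    have AsM: "As (Suc m) \<in> sets M" using toM[OF AsF[OF Suc.prems] Suc.prems] .
    have BsM: "Bs (Suc m) \<in> sets M" using toM[OF BsF[OF Suc.prems] Suc.prems] .
    have ZSM: "Z (Suc m) \<in> borel_measurable M" using ZM[OF Suc.prems] .
    have disj: "indicator (As (Suc m)) \<omega> + indicator (Bs (Suc m)) \<omega> = (indicator (Bs m) \<omega> :: real)" for \<omega>
    proof -
      have "As (Suc m) \<inter> Bs (Suc m) = {}" by (auto simp: As_def Bs_def)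
      moreover have "As (Suc m) \<union> Bs (Suc m) = Bs m"
        by (auto simp: As_def Bs_def E_def atLeastLessThanSuc_atLeastAtMost atLeastAtMostSuc_conv)
      ultimately show ?thesis by (auto simp: indicator_def)
    qed
    have sum2: "(\<integral>\<^sup>+\<omega>. ennreal (Z (Suc m) \<omega> * indicator (As (Suc m)) \<omega>) \<partial>M)
        + (\<integral>\<^sup>+\<omega>. ennreal (Z (Suc m) \<omega> * indicator (Bs (Suc m)) \<omega>) \<partial>M)
        = (\<integral>\<^sup>+\<omega>. ennreal (Z (Suc m) \<omega> * indicator (Bs m) \<omega>) \<partial>M)"
    proof -
      have "(\<integral>\<^sup>+\<omega>. ennreal (Z (Suc m) \<omega> * indicator (As (Suc m)) \<omega>) \<partial>M)
        + (\<integral>\<^sup>+\<omega>. ennreal (Z (Suc m) \<omega> * indicator (Bs (Suc m)) \<omega>) \<partial>M)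
        = (\<integral>\<^sup>+\<omega>. ennreal (Z (Suc m) \<omega> * indicator (As (Suc m)) \<omega>) + ennreal (Z (Suc m) \<omega> * indicator (Bs (Suc m)) \<omega>) \<partial>M)"
        by (rule nn_integral_add[symmetric]) (use ZSM AsM BsM in measurable)
      also have "\<dots> = (\<integral>\<^sup>+\<omega>. ennreal (Z (Suc m) \<omega> * indicator (Bs m) \<omega>) \<partial>M)"
      proof (rule nn_integral_cong)
        fix \<omega>
        have "ennreal (Z (Suc m) \<omega> * indicator (As (Suc m)) \<omega>) + ennreal (Z (Suc m) \<omega> * indicator (Bs (Suc m)) \<omega>)
            = ennreal (Z (Suc m) \<omega> * indicator (As (Suc m)) \<omega> + Z (Suc m) \<omega> * indicator (Bs (Suc m)) \<omega>)"
          by (rule ennreal_plus[symmetric]) (auto simp: Z0)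
        also have "\<dots> = ennreal (Z (Suc m) \<omega> * indicator (Bs m) \<omega>)"
          using disj[of \<omega>] by (simp add: distrib_left[symmetric])
        finally show "ennreal (Z (Suc m) \<omega> * indicator (As (Suc m)) \<omega>) + ennreal (Z (Suc m) \<omega> * indicator (Bs (Suc m)) \<omega>)
            = ennreal (Z (Suc m) \<omega> * indicator (Bs m) \<omega>)" .
      qed
      finally show ?thesis .
    qed
    have "(\<Sum>k=1..Suc m. \<integral>\<^sup>+\<omega>. ennreal (Z k \<omega> * indicator (As k) \<omega>) \<partial>M)
      + (\<integral>\<^sup>+\<omega>. ennreal (Z (Suc m) \<omega> * indicator (Bs (Suc m)) \<omega>) \<partial>M)
      = (\<Sum>k=1..m. \<integral>\<^sup>+\<omega>. ennreal (Z k \<omega> * indicator (As k) \<omega>) \<partial>M)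
        + (\<integral>\<^sup>+\<omega>. ennreal (Z (Suc m) \<omega> * indicator (Bs m) \<omega>) \<partial>M)"
      using sum2 by (simp add: add.assoc)
    also have "\<dots> \<le> (\<Sum>k=1..m. \<integral>\<^sup>+\<omega>. ennreal (Z k \<omega> * indicator (As k) \<omega>) \<partial>M)
        + (\<integral>\<^sup>+\<omega>. ennreal (Z m \<omega> * indicator (Bs m) \<omega>) \<partial>M)"
      using step by (rule add_left_mono)
    also have "\<dots> \<le> 1" by (rule Suc.IH[OF mn])
    finally show ?case .
  qed
  define T where "T = {\<omega> \<in> space M. \<exists>k\<in>{1..n}.
            (\<Sum>i=1..k. \<xi> i \<omega>) \<ge> x \<and>
            (\<Sum>i=1..k. real_cond_exp M (F (i - 1))
                          (\<lambda>\<omega>'. (\<xi> i \<omega>')\<^sup>2 * indicator {\<omega>'' \<in> space M. \<bar>\<xi> i \<omega>''\<bar> \<le> y} \<omega>') \<omega>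
                        + (\<xi> i \<omega>)\<^sup>2 * indicator {\<omega>'' \<in> space M. \<bar>\<xi> i \<omega>''\<bar> > y} \<omega>) \<le> v\<^sup>2}"
  have T_eq: "T = (\<Union>k\<in>{1..n}. E k)" by (auto simp: T_def E_def S_def Mk_def)
  have TM: "T \<in> sets M" unfolding T_eq using EF toM by (intro sets.finite_UN) auto
  define c where "c = exp (l*x - g* v\<^sup>2)"
  have cpos: "c > 0" by (simp add: c_def)
  have ptw: "ennreal c * indicator T \<omega> \<le> (\<Sum>k=1..n. ennreal (Z k \<omega> * indicator (As k) \<omega>))" for \<omega>
  proof (cases "\<omega> \<in> T")
    case False then show ?thesis by simp
  next
    case True
    then have ex: "\<exists>k. k \<in> {1..n} \<and> \<omega> \<in> E k" unfolding T_eq by blast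
    define k where "k = (LEAST k. k \<in> {1..n} \<and> \<omega> \<in> E k)"
    have k: "k \<in> {1..n}" "\<omega> \<in> E k" using LeastI_ex[OF ex] by (simp_all add: k_def)
    have kmin: "\<omega> \<notin> E j" if "j \<in> {1..<k}" for j
    proof
      assume "\<omega> \<in> E j"
      then have "k \<le> j" unfolding k_def using that k(1) by (intro Least_le) auto
      then show False using that by simp
    qed
    have As: "\<omega> \<in> As k" using k kmin by (auto simp: As_def)
    have "l*x - g* v\<^sup>2 \<le> l * S k \<omega> - g * Mk k \<omega>"
    proof -
      have "l*x \<le> l * S k \<omega>" using k(2) l0 by (intro mult_left_mono) (auto simp: E_def)
      moreover have "g * Mk k \<omega> \<le> g* v\<^sup>2" using k(2) g0 by (intro mult_left_mono) (auto simp: E_def)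
      ultimately show ?thesis by linarith
    qed
    then have cZ: "c \<le> Z k \<omega>" by (simp add: c_def Z_def)
    have "ennreal c * indicator T \<omega> = ennreal (Z k \<omega> * indicator (As k) \<omega>) - ennreal (Z k \<omega> * indicator (As k) \<omega>) + ennreal c"
      using True As by simp
    have "ennreal c * indicator T \<omega> \<le> ennreal (Z k \<omega> * indicator (As k) \<omega>)"
      using True As cZ by (simp add: ennreal_leI)
    also have "\<dots> \<le> (\<Sum>k=1..n. ennreal (Z k \<omega> * indicator (As k) \<omega>))"
      by (rule member_le_sum) (use k in auto)
    finally show ?thesis .
  qed
  have "ennreal c * emeasure M T = (\<integral>\<^sup>+\<omega>. ennreal c * indicator T \<omega> \<partial>M)"
    by (rule nn_integral_cmult_indicator[symmetric, OF TM])
  also have "\<dots> \<le> (\<integral>\<^sup>+\<omega>. (\<Sum>k=1..n. ennreal (Z k \<omega> * indicator (As k) \<omega>)) \<partial>M)"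
    by (rule nn_integral_mono) (rule ptw)
  also have "\<dots> = (\<Sum>k=1..n. \<integral>\<^sup>+\<omega>. ennreal (Z k \<omega> * indicator (As k) \<omega>) \<partial>M)"
  proof (rule nn_integral_sum)
    fix k assume "k \<in> {1..n}"
    then have [measurable]: "Z k \<in> borel_measurable M" "As k \<in> sets M" using ZM toM AsF by auto
    show "(\<lambda>\<omega>. ennreal (Z k \<omega> * indicator (As k) \<omega>)) \<in> borel_measurable M" by measurable
  qed
  also have "\<dots> \<le> (\<Sum>k=1..n. \<integral>\<^sup>+\<omega>. ennreal (Z k \<omega> * indicator (As k) \<omega>) \<partial>M)
      + (\<integral>\<^sup>+\<omega>. ennreal (Z n \<omega> * indicator (Bs n) \<omega>) \<partial>M)" by simp
  also have "\<dots> \<le> 1" by (rule inv) simp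
  finally have le1: "ennreal c * emeasure M T \<le> 1" .
  have "ennreal (c * measure M T) \<le> 1"
    using le1 cpos by (simp add: P.emeasure_eq_measure ennreal_mult)
  then have "c * measure M T \<le> 1" by (simp add: ennreal_le_1)
  then have "measure M T \<le> 1 / c" using cpos by (simp add: pos_le_divide_eq mult.commute)
  also have "1 / c = exp (- (l*x - g * v\<^sup>2))" unfolding c_def by (simp only: exp_minus inverse_eq_divide)
  also have "\<dots> = B0 x y v" unfolding Bx by (simp add: algebra_simps)
  finally show ?thesis unfolding T_def .
qed

end
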